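(* Let $\rhd$ be a value system and let $\mathcal{I}$ be an assignment that is admissible for $\rhd$. Then $\mathcal{I}$ is an interpretation and $s\rhd\hat{\mathcal{I}}s$ for all terms $s$. Furthermore, if $\rhd$ is functional, then $\mathcal{I}$ is surjective.
   Context: Types: a countable set of base types ($\beta$); every base type is a type and $\sigma\tau$ is a type (functions from $\sigma$ to $\tau$) for types $\sigma,\tau$. Countably many names, each with a unique type, infinitely many of each type. Terms: names; $st:\mu$ for $s:\tau\mu,t:\tau$; $\lambda x.t:\sigma\tau$ for a name $x:\sigma$, $t:\tau$. $\mathrm{Wff}_\sigma$: terms of type $\sigma$. A frame $\mathcal{D}$ maps types to nonempty sets with $\mathcal{D}(\sigma\tau)\subseteq(\mathcal{D}\sigma\to\mathcal{D}\tau)$. An assignment $\mathcal{I}$ into $\mathcal{D}$ extends $\mathcal{D}$ and maps each name $x:\sigma$ into $\mathcal{D}\sigma$; $\mathcal{I}^x_a$ is the update at $x$. Partial evaluation: $\hat{\mathcal{I}}x=\mathcal{I}x$; $\hat{\mathcal{I}}(st)=(\hat{\mathcal{I}}s)(\hat{\mathcal{I}}t)$ when both are defined; $\hat{\mathcal{I}}(\lambda x.s)=f$ if $\lambda x.s:\sigma\tau$, $f\in\mathcal{D}(\sigma\tau)$ and $\widehat{\mathcal{I}^x_a}s=fa$ for all $a\in\mathcal{D}\sigma$ (undefined otherwise). An interpretation is an assignment whose evaluation is total; it is surjective if for every type $\sigma$ and every $a\in\mathcal{I}\sigma$ there is $s:\sigma$ with $\hat{\mathcal{I}}s=a$. Normalization: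 a fixed type-preserving total $[\cdot]$ on terms with (N1) $[[s]]=[s]$; (N2) $[[s]t]=[st]$; (N3) $[xs_1\dots s_n]=x[s_1]\dots[s_n]$ for a name $x$, $n\ge0$, $xs_1\dots s_n$ of base type; (N4) $\hat{\mathcal{I}}[s]=\hat{\mathcal{I}}s$ for every interpretation. A substitution is a type-preserving partial function $\theta$ from names to terms ($\theta^x_s$ the update); every substitution extends to a type-preserving total $\hat\theta$ with (S1) $\hat\theta x=\theta x$ if $x\in\mathrm{Dom}\theta$, else $x$; (S2) $\hat\theta(st)=(\hat\theta s)(\hat\theta t)$; (S3) $[(\hat\theta(\lambda x.s))t]=[\widehat{\theta^x_t}s]$; (S4) $[\hat\emptyset s]=[s]$ where $\emptyset$ is the empty substitution. A value system is a function $\rhd$ mapping each base type $\beta$ to a binary relation $\rhd_\beta$ with $\mathrm{Dom}(\rhd_\beta)\subseteq\mathrm{Wff}_\beta$ such that $s\rhd_\beta a$ iff $[s]\rhd_\beta a$; extended by $\mathcal{D}\sigma:=\mathrm{Ran}(\rhd_\sigma)$ and $\rhd_{\sigma\tau}:=\{(s,f)\in\mathrm{Wff}_{\sigma\tau}\times(\mathcal{D}\sigma\to\mathcal{D}\tau):\forall(t,a)\in\rhd_\sigma,\ (st,fa)\in\rhd_\tau\}$. It is functional if each $\rhd_\beta$ ($\beta$ a base type) is a functional relation. An assignment $\mathcal{I}$ is admissible for $\rhd$ if $\mathcal{I}\sigma=\mathcal{D}\sigma$ for all types $\sigma$ and $x\rhd\mathcal{I}x$ for all names $x$. *)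

theory Defs
  imports Main "HOL-Library.Countable"
begin

datatype 'b ty = Base 'b | Fn "'b ty" "'b ty"

text \<open>Names: countably many, each with a unique type (the second component),
  infinitely many of each type.\<close>
type_synonym 'b name = "nat \<times> 'b ty"

definition nty :: "'b name \<Rightarrow> 'b ty" where "nty x = snd x"

datatype 'b tm = Nm "'b name" | Ap "'b tm" "'b tm" | Lm "'b name" "'b tm"

fun typeof :: "'b tm \<Rightarrow> 'b ty option" where
  "typeof (Nm x) = Some (nty x)"
| "typeof (Ap s t) = (case typeof s of
      Some (Fn \<sigma> \<tau>) \<Rightarrow> (if typeof t = Some \<sigma> then Some \<tau> else None)
    | _ \<Rightarrow> None)"
| "typeof (Lm x s) = map_option (Fn (nty x)) (typeof s)"

definition Wff :: "'b ty \<Rightarrow> 'b tm set" where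
  "Wff \<sigma> = {s. typeof s = Some \<sigma>}"

text \<open>Values live in a universe type 'v; an element f of a function domain
  acts on arguments through the application operation ap.  The frame condition
  D(st) \<subseteq> (D s \<rightarrow> D t) is rendered as: ap maps D(st) \<times> D s into D t and
  elements of D(st) are determined by their action on D s (extensionality).\<close>

definition frame :: "('v \<Rightarrow> 'v \<Rightarrow> 'v) \<Rightarrow> ('b ty \<Rightarrow> 'v set) \<Rightarrow> bool" where
  "frame ap D \<longleftrightarrow>
     (\<forall>\<sigma>. D \<sigma> \<noteq> {}) \<and>
     (\<forall>\<sigma> \<tau>. \<forall>f\<in>D (Fn \<sigma> \<tau>). \<forall>a\<in>D \<sigma>. ap f a \<in> D \<tau>) \<and>
     (\<forall>\<sigma> \<tau>. \<forall>f\<in>D (Fn \<sigma> \<tau>). \<forall>g\<in>D (Fn \<sigma> \<tau>). (\<forall>a\<in>D \<sigma>. ap f a = ap g a) \<longrightarrow> f = g)"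

definition assignment :: "('v \<Rightarrow> 'v \<Rightarrow> 'v) \<Rightarrow> ('b ty \<Rightarrow> 'v set) \<Rightarrow> ('b name \<Rightarrow> 'v) \<Rightarrow> bool" where
  "assignment ap D I \<longleftrightarrow> frame ap D \<and> (\<forall>x. I x \<in> D (nty x))"

fun eval :: "('v \<Rightarrow> 'v \<Rightarrow> 'v) \<Rightarrow> ('b ty \<Rightarrow> 'v set) \<Rightarrow> ('b name \<Rightarrow> 'v) \<Rightarrow> 'b tm \<Rightarrow> 'v option" where
  "eval ap D I (Nm x) = Some (I x)"
| "eval ap D I (Ap s t) = (case (eval ap D I s, eval ap D I t) of
      (Some f, Some a) \<Rightarrow> Some (ap f a) | _ \<Rightarrow> None)"
| "eval ap D I (Lm x s) = (case typeof (Lm x s) of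
      Some (Fn \<sigma> \<tau>) \<Rightarrow>
        (if \<exists>f\<in>D (Fn \<sigma> \<tau>). \<forall>a\<in>D \<sigma>. eval ap D (I(x := a)) s = Some (ap f a)
         then Some (THE f. f \<in> D (Fn \<sigma> \<tau>) \<and> (\<forall>a\<in>D \<sigma>. eval ap D (I(x := a)) s = Some (ap f a)))
         else None)
    | _ \<Rightarrow> None)"

definition is_interp :: "('v \<Rightarrow> 'v \<Rightarrow> 'v) \<Rightarrow> ('b ty \<Rightarrow> 'v set) \<Rightarrow> ('b name \<Rightarrow> 'v) \<Rightarrow> bool" where
  "is_interp ap D I \<longleftrightarrow> assignment ap D I \<and> (\<forall>\<sigma>. \<forall>s\<in>Wff \<sigma>. eval ap D I s \<noteq> None)"

definition surjective_interp :: "('v \<Rightarrow> 'v \<Rightarrow> 'v) \<Rightarrow> ('b ty \<Rightarrow> 'v set) \<Rightarrow> ('b name \<Rightarrow> 'v) \<Rightarrow> bool" where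
  "surjective_interp ap D I \<longleftrightarrow> is_interp ap D I \<and>
     (\<forall>\<sigma>. \<forall>a\<in>D \<sigma>. \<exists>s\<in>Wff \<sigma>. eval ap D I s = Some a)"

definition normalization :: "('v \<Rightarrow> 'v \<Rightarrow> 'v) \<Rightarrow> ('b tm \<Rightarrow> 'b tm) \<Rightarrow> bool" where
  "normalization ap norm \<longleftrightarrow>
     (\<forall>\<sigma>. \<forall>s\<in>Wff \<sigma>. norm s \<in> Wff \<sigma>) \<and>
     (\<forall>\<sigma>. \<forall>s\<in>Wff \<sigma>. norm (norm s) = norm s) \<and>
     (\<forall>\<sigma> s t. Ap s t \<in> Wff \<sigma> \<longrightarrow> norm (Ap (norm s) t) = norm (Ap s t)) \<and>
     (\<forall>\<beta> x ss. foldl Ap (Nm x) ss \<in> Wff (Base \<beta>) \<longrightarrow>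
        norm (foldl Ap (Nm x) ss) = foldl Ap (Nm x) (map norm ss)) \<and>
     (\<forall>(D :: 'b ty \<Rightarrow> 'v set) I. is_interp ap D I \<longrightarrow>
        (\<forall>\<sigma>. \<forall>s\<in>Wff \<sigma>. eval ap D I (norm s) = eval ap D I s))"

definition substitution :: "('b name \<rightharpoonup> 'b tm) \<Rightarrow> bool" where
  "substitution \<theta> \<longleftrightarrow> (\<forall>x t. \<theta> x = Some t \<longrightarrow> t \<in> Wff (nty x))"

definition subst_ext :: "('b tm \<Rightarrow> 'b tm) \<Rightarrow> (('b name \<rightharpoonup> 'b tm) \<Rightarrow> 'b tm \<Rightarrow> 'b tm) \<Rightarrow> bool" where
  "subst_ext norm sub \<longleftrightarrow>
     (\<forall>\<theta>. substitution \<theta> \<longrightarrow>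
       (\<forall>\<sigma>. \<forall>s\<in>Wff \<sigma>. sub \<theta> s \<in> Wff \<sigma>) \<and>
       (\<forall>x. sub \<theta> (Nm x) = (case \<theta> x of Some t \<Rightarrow> t | None \<Rightarrow> Nm x)) \<and>
       (\<forall>\<sigma> s t. Ap s t \<in> Wff \<sigma> \<longrightarrow> sub \<theta> (Ap s t) = Ap (sub \<theta> s) (sub \<theta> t)) \<and>
       (\<forall>\<sigma> \<tau> x s t. Lm x s \<in> Wff (Fn \<sigma> \<tau>) \<longrightarrow> t \<in> Wff \<sigma> \<longrightarrow>
          norm (Ap (sub \<theta> (Lm x s)) t) = norm (sub (\<theta>(x \<mapsto> t)) s))) \<and>
     (\<forall>\<sigma>. \<forall>s\<in>Wff \<sigma>. norm (sub Map.empty s) = norm s)"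

text \<open>vs \<beta> s a  means  s \<rhd>_\<beta> a.\<close>
definition value_system :: "('b tm \<Rightarrow> 'b tm) \<Rightarrow> ('b \<Rightarrow> 'b tm \<Rightarrow> 'v \<Rightarrow> bool) \<Rightarrow> bool" where
  "value_system norm vs \<longleftrightarrow>
     (\<forall>\<beta> s a. vs \<beta> s a \<longrightarrow> s \<in> Wff (Base \<beta>)) \<and>
     (\<forall>\<beta> s a. s \<in> Wff (Base \<beta>) \<longrightarrow> (vs \<beta> s a \<longleftrightarrow> vs \<beta> (norm s) a))"

text \<open>Extension to all types.  fs \<sigma> \<tau> is the universe's copy of the full
  function space  D \<sigma> \<rightarrow> D \<tau>  (see full_function_spaces).\<close>
fun vrel :: "('b \<Rightarrow> 'b tm \<Rightarrow> 'v \<Rightarrow> bool) \<Rightarrow> ('v \<Rightarrow> 'v \<Rightarrow> 'v) \<Rightarrow> ('b ty \<Rightarrow> 'b ty \<Rightarrow> 'v set)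
              \<Rightarrow> 'b ty \<Rightarrow> 'b tm \<Rightarrow> 'v \<Rightarrow> bool" where
  "vrel vs ap fs (Base \<beta>) s a = vs \<beta> s a"
| "vrel vs ap fs (Fn \<sigma> \<tau>) s f =
     (s \<in> Wff (Fn \<sigma> \<tau>) \<and> f \<in> fs \<sigma> \<tau> \<and>
      (\<forall>t a. vrel vs ap fs \<sigma> t a \<longrightarrow> vrel vs ap fs \<tau> (Ap s t) (ap f a)))"

definition vdom :: "('b \<Rightarrow> 'b tm \<Rightarrow> 'v \<Rightarrow> bool) \<Rightarrow> ('v \<Rightarrow> 'v \<Rightarrow> 'v) \<Rightarrow> ('b ty \<Rightarrow> 'b ty \<Rightarrow> 'v set)
              \<Rightarrow> 'b ty \<Rightarrow> 'v set" where
  "vdom vs ap fs \<sigma> = {a. \<exists>s. vrel vs ap fs \<sigma> s a}"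

definition full_fs :: "('v \<Rightarrow> 'v \<Rightarrow> 'v) \<Rightarrow> 'v set \<Rightarrow> 'v set \<Rightarrow> 'v set \<Rightarrow> bool" where
  "full_fs ap A B F \<longleftrightarrow>
     (\<forall>f\<in>F. \<forall>a\<in>A. ap f a \<in> B) \<and>
     (\<forall>g. (\<forall>a\<in>A. g a \<in> B) \<longrightarrow> (\<exists>!f. f \<in> F \<and> (\<forall>a\<in>A. ap f a = g a)))"

definition full_function_spaces :: "('b \<Rightarrow> 'b tm \<Rightarrow> 'v \<Rightarrow> bool) \<Rightarrow> ('v \<Rightarrow> 'v \<Rightarrow> 'v)
              \<Rightarrow> ('b ty \<Rightarrow> 'b ty \<Rightarrow> 'v set) \<Rightarrow> bool" where
  "full_function_spaces vs ap fs \<longleftrightarrow>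
     (\<forall>\<sigma> \<tau>. full_fs ap (vdom vs ap fs \<sigma>) (vdom vs ap fs \<tau>) (fs \<sigma> \<tau>))"

definition functional_vs :: "('b \<Rightarrow> 'b tm \<Rightarrow> 'v \<Rightarrow> bool) \<Rightarrow> bool" where
  "functional_vs vs \<longleftrightarrow> (\<forall>\<beta> s a b. vs \<beta> s a \<longrightarrow> vs \<beta> s b \<longrightarrow> a = b)"

definition admissible :: "('b \<Rightarrow> 'b tm \<Rightarrow> 'v \<Rightarrow> bool) \<Rightarrow> ('v \<Rightarrow> 'v \<Rightarrow> 'v)
              \<Rightarrow> ('b ty \<Rightarrow> 'b ty \<Rightarrow> 'v set) \<Rightarrow> ('b name \<Rightarrow> 'v) \<Rightarrow> bool" where
  "admissible vs ap fs I \<longleftrightarrow>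
     assignment ap (vdom vs ap fs) I \<and> (\<forall>x. vrel vs ap fs (nty x) (Nm x) (I x))"

end

theory Submission
  imports Defs
begin

lemma Wff_Ap: "Ap s t \<in> Wff \<tau> \<longleftrightarrow> (\<exists>\<sigma>. s \<in> Wff (Fn \<sigma> \<tau>) \<and> t \<in> Wff \<sigma>)"
  by (auto simp: Wff_def split: option.splits ty.splits if_splits)

lemma Wff_Nm: "Nm x \<in> Wff \<sigma> \<longleftrightarrow> \<sigma> = nty x"
  by (auto simp: Wff_def)

lemma Wff_Lm: "Lm x s \<in> Wff \<sigma> \<longleftrightarrow> (\<exists>\<tau>. \<sigma> = Fn (nty x) \<tau> \<and> s \<in> Wff \<tau>)"
  by (auto simp: Wff_def)

lemma vrel_Wff:
  assumes "value_system norm vs" shows "vrel vs ap fs \<sigma> s a \<Longrightarrow> s \<in> Wff \<sigma>"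
  using assms by (cases \<sigma>) (auto simp: value_system_def)

lemma vrel_norm:
  assumes N: "normalization ap norm" and V: "value_system norm vs"
  shows "s \<in> Wff \<sigma> \<Longrightarrow> vrel vs ap fs \<sigma> s a \<longleftrightarrow> vrel vs ap fs \<sigma> (norm s) a"
proof (induction \<sigma> arbitrary: s a)
  case (Base \<beta>)
  then show ?case using V by (simp add: value_system_def)
next
  case (Fn \<sigma> \<tau>)
  have ns: "norm s \<in> Wff (Fn \<sigma> \<tau>)" using N Fn.prems by (simp add: normalization_def)
  have key: "vrel vs ap fs \<tau> (Ap s t) b \<longleftrightarrow> vrel vs ap fs \<tau> (Ap (norm s) t) b"
    if t: "t \<in> Wff \<sigma>" for t b
  proof -
    have a1: "Ap s t \<in> Wff \<tau>" using Fn.prems t Wff_Ap by blast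
    have a2: "Ap (norm s) t \<in> Wff \<tau>" using ns t Wff_Ap by blast
    have e: "norm (Ap (norm s) t) = norm (Ap s t)" using N a1 by (simp add: normalization_def)
    show ?thesis using Fn.IH(2)[OF a1] Fn.IH(2)[OF a2] e by simp
  qed
  show ?case
    using Fn.prems ns key vrel_Wff[OF V] by auto
qed

lemma main:
  assumes N: "normalization ap norm" and S: "subst_ext norm sub"
    and V: "value_system norm vs" and F: "full_function_spaces vs ap fs"
    and Fr: "frame ap (vdom vs ap fs)"
  shows "s \<in> Wff \<sigma> \<Longrightarrow> substitution \<theta> \<Longrightarrow>
     (\<forall>x. vrel vs ap fs (nty x) (case \<theta> x of Some t \<Rightarrow> t | None \<Rightarrow> Nm x) (J x)) \<Longrightarrow>
     \<exists>a. eval ap (vdom vs ap fs) J s = Some a \<and> vrel vs ap fs \<sigma> (sub \<theta> s) a"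
proof (induction s arbitrary: \<sigma> \<theta> J)
  case (Nm x)
  have e: "sub \<theta> (Nm x) = (case \<theta> x of Some t \<Rightarrow> t | None \<Rightarrow> Nm x)"
    using S Nm.prems(2) unfolding subst_ext_def by blast
  have "\<sigma> = nty x" using Nm.prems(1) Wff_Nm by blast
  then show ?case using e spec[OF Nm.prems(3), of x] by simp
next
  case (Ap s t)
  then obtain \<rho> where s: "s \<in> Wff (Fn \<rho> \<sigma>)" and t: "t \<in> Wff \<rho>" using Wff_Ap by blast
  obtain f where f: "eval ap (vdom vs ap fs) J s = Some f" "vrel vs ap fs (Fn \<rho> \<sigma>) (sub \<theta> s) f"
    using Ap.IH(1)[OF s Ap.prems(2,3)] by blast
  obtain a where a: "eval ap (vdom vs ap fs) J t = Some a" "vrel vs ap fs \<rho> (sub \<theta> t) a"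
    using Ap.IH(2)[OF t Ap.prems(2,3)] by blast
  have "sub \<theta> (Ap s t) = Ap (sub \<theta> s) (sub \<theta> t)" using S Ap.prems by (auto simp: subst_ext_def)
  then show ?case using f a by auto
next
  case (Lm x s)
  then obtain \<tau> where \<sigma>: "\<sigma> = Fn (nty x) \<tau>" and s: "s \<in> Wff \<tau>" using Wff_Lm by blast
  let ?D = "vdom vs ap fs"
  have IH: "\<exists>b. eval ap ?D (J(x:=a)) s = Some b \<and> vrel vs ap fs \<tau> (sub (\<theta>(x \<mapsto> t)) s) b"
    if ta: "vrel vs ap fs (nty x) t a" for t a
  proof (rule Lm.IH[OF s])
    show "substitution (\<theta>(x \<mapsto> t))" using Lm.prems(2) vrel_Wff[OF V ta]
      by (auto simp: substitution_def)
    show "\<forall>y. vrel vs ap fs (nty y) (case (\<theta>(x \<mapsto> t)) y of Some t \<Rightarrow> t | None \<Rightarrow> Nm y) ((J(x:=a)) y)"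
      using Lm.prems(3) ta by auto
  qed
  define g where "g a = (THE b. eval ap ?D (J(x:=a)) s = Some b)" for a
  have g: "eval ap ?D (J(x:=a)) s = Some (g a)" "vrel vs ap fs \<tau> (sub (\<theta>(x \<mapsto> t)) s) (g a)"
    if ta: "vrel vs ap fs (nty x) t a" for t a
  proof -
    obtain b where b: "eval ap ?D (J(x:=a)) s = Some b" "vrel vs ap fs \<tau> (sub (\<theta>(x \<mapsto> t)) s) b"
      using IH[OF ta] by blast
    have "g a = b" unfolding g_def using b(1) by simp
    then show "eval ap ?D (J(x:=a)) s = Some (g a)" "vrel vs ap fs \<tau> (sub (\<theta>(x \<mapsto> t)) s) (g a)"
      using b by auto
  qed
  have gD: "\<forall>a\<in>?D (nty x). g a \<in> ?D \<tau>"
    using g(2) by (auto simp: vdom_def)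
  from F have ffs: "full_fs ap (?D (nty x)) (?D \<tau>) (fs (nty x) \<tau>)"
    by (simp add: full_function_spaces_def)
  then obtain f where f: "f \<in> fs (nty x) \<tau>" "\<forall>a\<in>?D (nty x). ap f a = g a"
    using gD unfolding full_fs_def by blast
  have sl: "Lm x s \<in> Wff (Fn (nty x) \<tau>)" using s Wff_Lm by blast
  have swff: "sub \<theta> (Lm x s) \<in> Wff (Fn (nty x) \<tau>)"
    using S Lm.prems(2) sl by (auto simp: subst_ext_def)
  have vf: "vrel vs ap fs (Fn (nty x) \<tau>) (sub \<theta> (Lm x s)) f"
  proof -
    have "vrel vs ap fs \<tau> (Ap (sub \<theta> (Lm x s)) t) (ap f a)" if ta: "vrel vs ap fs (nty x) t a" for t a
    proof -
      have aD: "a \<in> ?D (nty x)" using ta by (auto simp: vdom_def)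
      have tw: "t \<in> Wff (nty x)" using vrel_Wff[OF V ta] .
      have apw: "Ap (sub \<theta> (Lm x s)) t \<in> Wff \<tau>" using swff tw Wff_Ap by blast
      have sw2: "sub (\<theta>(x \<mapsto> t)) s \<in> Wff \<tau>"
        using S s Lm.prems(2) tw by (auto simp: subst_ext_def substitution_def)
      have e: "norm (Ap (sub \<theta> (Lm x s)) t) = norm (sub (\<theta>(x \<mapsto> t)) s)"
        using S Lm.prems(2) sl tw unfolding subst_ext_def by blast
      have "vrel vs ap fs \<tau> (norm (sub (\<theta>(x \<mapsto> t)) s)) (g a)"
        using g(2)[OF ta] vrel_norm[OF N V sw2] by simp
      then have "vrel vs ap fs \<tau> (Ap (sub \<theta> (Lm x s)) t) (g a)"
        using vrel_norm[OF N V apw] e by simp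
      then show ?thesis using f(2) aD by simp
    qed
    then show ?thesis using swff f(1) by simp
  qed
  have fD: "f \<in> ?D (Fn (nty x) \<tau>)" using vf by (auto simp: vdom_def)
  have P: "\<forall>a\<in>?D (nty x). eval ap ?D (J(x := a)) s = Some (ap f a)"
    using f(2) g(1) by (auto simp: vdom_def)
  have uniq: "(THE f'. f' \<in> ?D (Fn (nty x) \<tau>) \<and> (\<forall>a\<in>?D (nty x). eval ap ?D (J(x := a)) s = Some (ap f' a))) = f"
  proof (rule the_equality)
    show "f \<in> ?D (Fn (nty x) \<tau>) \<and> (\<forall>a\<in>?D (nty x). eval ap ?D (J(x := a)) s = Some (ap f a))"
      using fD P by blast
    fix f' assume h: "f' \<in> ?D (Fn (nty x) \<tau>) \<and> (\<forall>a\<in>?D (nty x). eval ap ?D (J(x := a)) s = Some (ap f' a))"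
    then have "\<forall>a\<in>?D (nty x). ap f' a = ap f a" using P by fastforce
    then show "f' = f" using Fr h fD unfolding frame_def by blast
  qed
  have ty: "typeof (Lm x s) = Some (Fn (nty x) \<tau>)" using sl by (simp add: Wff_def)
  have "eval ap ?D J (Lm x s) = Some f"
    using fD P uniq by (simp only: eval.simps ty option.case ty.case) auto
  then show ?case using vf \<sigma> by blast
qed

lemma vrel_functional:
  assumes V: "value_system norm vs" and F: "full_function_spaces vs ap fs"
    and fv: "functional_vs vs"
  shows "vrel vs ap fs \<sigma> s a \<Longrightarrow> vrel vs ap fs \<sigma> s b \<Longrightarrow> a = b"
proof (induction \<sigma> arbitrary: s a b)
  case (Base \<beta>)
  then show ?case using fv by (auto simp: functional_vs_def)
next
  case (Fn \<sigma> \<tau>)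
  let ?D = "vdom vs ap fs"
  have ffs: "full_fs ap (?D \<sigma>) (?D \<tau>) (fs \<sigma> \<tau>)" using F by (simp add: full_function_spaces_def)
  have eq: "\<forall>c\<in>?D \<sigma>. ap a c = ap b c"
  proof
    fix c assume "c \<in> ?D \<sigma>"
    then obtain t where t: "vrel vs ap fs \<sigma> t c" by (auto simp: vdom_def)
    have "vrel vs ap fs \<tau> (Ap s t) (ap a c)" "vrel vs ap fs \<tau> (Ap s t) (ap b c)"
      using Fn.prems t by auto
    then show "ap a c = ap b c" using Fn.IH(2) by blast
  qed
  have ab: "a \<in> fs \<sigma> \<tau>" "b \<in> fs \<sigma> \<tau>" using Fn.prems by auto
  have "\<forall>c\<in>?D \<sigma>. ap a c \<in> ?D \<tau>" using ffs ab unfolding full_fs_def by blast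
  then have "\<exists>!f. f \<in> fs \<sigma> \<tau> \<and> (\<forall>c\<in>?D \<sigma>. ap f c = ap a c)" using ffs unfolding full_fs_def by blast
  then show ?case using ab eq by metis
qed

theorem theorem3p4:
  fixes norm :: "'b::countable tm \<Rightarrow> 'b tm"
    and sub :: "('b name \<rightharpoonup> 'b tm) \<Rightarrow> 'b tm \<Rightarrow> 'b tm"
    and ap :: "'v \<Rightarrow> 'v \<Rightarrow> 'v"
    and fs :: "'b ty \<Rightarrow> 'b ty \<Rightarrow> 'v set"
    and vs :: "'b \<Rightarrow> 'b tm \<Rightarrow> 'v \<Rightarrow> bool"
    and I :: "'b name \<Rightarrow> 'v"
  assumes "normalization ap norm"
    and "subst_ext norm sub"
    and "value_system norm vs"
    and "full_function_spaces vs ap fs"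
    and "admissible vs ap fs I"
  shows "is_interp ap (vdom vs ap fs) I
         \<and> (\<forall>\<sigma>. \<forall>s\<in>Wff \<sigma>. \<exists>a. eval ap (vdom vs ap fs) I s = Some a \<and> vrel vs ap fs \<sigma> s a)
         \<and> (functional_vs vs \<longrightarrow> surjective_interp ap (vdom vs ap fs) I)"
proof -
  note N = assms(1) and S = assms(2) and V = assms(3) and F = assms(4)
  have A: "assignment ap (vdom vs ap fs) I" and Ix: "\<forall>x. vrel vs ap fs (nty x) (Nm x) (I x)"
    using assms(5) by (auto simp: admissible_def)
  have Fr: "frame ap (vdom vs ap fs)" using A by (simp add: assignment_def)
  have se: "substitution Map.empty" by (simp add: substitution_def)
  have R: "\<forall>\<sigma>. \<forall>s\<in>Wff \<sigma>. \<exists>a. eval ap (vdom vs ap fs) I s = Some a \<and> vrel vs ap fs \<sigma> s a"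
  proof (intro allI ballI)
    fix \<sigma> and s :: "'b tm" assume s: "s \<in> Wff \<sigma>"
    obtain a where a: "eval ap (vdom vs ap fs) I s = Some a" "vrel vs ap fs \<sigma> (sub Map.empty s) a"
      using main[OF N S V F Fr s se, of I] Ix by auto
    have w: "sub Map.empty s \<in> Wff \<sigma>" using S se s by (auto simp: subst_ext_def)
    have e: "norm (sub Map.empty s) = norm s" using S s by (auto simp: subst_ext_def)
    have "vrel vs ap fs \<sigma> s a"
      using a(2) vrel_norm[OF N V w] vrel_norm[OF N V s] e by simp
    then show "\<exists>a. eval ap (vdom vs ap fs) I s = Some a \<and> vrel vs ap fs \<sigma> s a" using a(1) by blast
  qed
  have II: "is_interp ap (vdom vs ap fs) I" using A R by (auto simp: is_interp_def)
  have "surjective_interp ap (vdom vs ap fs) I" if fv: "functional_vs vs"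
  proof -
    have "\<exists>s\<in>Wff \<sigma>. eval ap (vdom vs ap fs) I s = Some a" if aD: "a \<in> vdom vs ap fs \<sigma>" for \<sigma> a
    proof -
      obtain s where s: "vrel vs ap fs \<sigma> s a" using aD unfolding vdom_def by blast
      have w: "s \<in> Wff \<sigma>" using vrel_Wff[OF V s] .
      obtain b where b: "eval ap (vdom vs ap fs) I s = Some b" "vrel vs ap fs \<sigma> s b" using R w by blast
      have "a = b" using vrel_functional[OF V F fv s b(2)] .
      then show ?thesis using w b by blast
    qed
    then show ?thesis using II by (auto simp: surjective_interp_def)
  qed
  then show ?thesis using II R by blast
qed

end
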